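(* Let $M$ be a locally principally quasi-retractable right $R$-module with $S=\mathrm{End}_R(M)$. If $S$ is a left centrally AIP ring, then $M$ is a centrally endo-AIP module.
   Context: For $X\subseteq M$, $l_S(X)=\{\phi\in S:\phi(X)=0\}$; for $I\subseteq S$, $r_M(I)=\{m\in M: I m=0\}$, and for $T\subseteq S$, $l_S(T)=\{f\in S: fT=0\}$. $M$ is locally principally quasi-retractable if for every principal ideal $I$ of $S$ with $r_M(I)\neq 0$ there is a nonzero $\psi\in S$ with $r_M(I)=\psi(M)$. An ideal $J$ of $S$ is centrally s-unital if for every $a\in J$ there is $z\in J$ central in $S$ with $az=a$. $S$ is left centrally AIP if $l_S(T)$ is centrally s-unital for every ideal $T$ of $S$. $M$ is centrally endo-AIP if $l_S(N)$ is a centrally s-unital ideal of $S$ for every fully invariant submodule $N$ of $M$. *)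

theory Defs
  imports Main
begin

text \<open>A right R-module: the abelian group 'm (whole type) with a right scalar action
  smult :: 'm => 'r => 'm, R a (not necessarily commutative) ring with 1.\<close>

definition right_module :: "('m::ab_group_add \<Rightarrow> 'r::ring_1 \<Rightarrow> 'm) \<Rightarrow> bool" where
  "right_module smult \<longleftrightarrow>
     (\<forall>x y r. smult (x + y) r = smult x r + smult y r) \<and>
     (\<forall>x r s. smult x (r + s) = smult x r + smult x s) \<and>
     (\<forall>x r s. smult x (r * s) = smult (smult x r) s) \<and>
     (\<forall>x. smult x 1 = x)"

text \<open>S = End_R(M), with addition pointwise, multiplication = composition
  (endomorphisms act on the left, so the product f g is f \<circ> g), zero = (\<lambda>_. 0).\<close>

definition End :: "('m::ab_group_add \<Rightarrow> 'r::ring_1 \<Rightarrow> 'm) \<Rightarrow> ('m \<Rightarrow> 'm) set" where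
  "End smult = {f. (\<forall>x y. f (x + y) = f x + f y) \<and> (\<forall>x r. f (smult x r) = smult (f x) r)}"

definition End_ideal :: "('m::ab_group_add \<Rightarrow> 'r::ring_1 \<Rightarrow> 'm) \<Rightarrow> ('m \<Rightarrow> 'm) set \<Rightarrow> bool" where
  "End_ideal smult I \<longleftrightarrow> I \<subseteq> End smult \<and> (\<lambda>_. 0) \<in> I \<and>
     (\<forall>a\<in>I. \<forall>b\<in>I. (\<lambda>x. a x - b x) \<in> I) \<and>
     (\<forall>s\<in>End smult. \<forall>a\<in>I. s \<circ> a \<in> I \<and> a \<circ> s \<in> I)"

definition End_principal_ideal_gen :: "('m::ab_group_add \<Rightarrow> 'r::ring_1 \<Rightarrow> 'm) \<Rightarrow> ('m \<Rightarrow> 'm) \<Rightarrow> ('m \<Rightarrow> 'm) set" where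
  "End_principal_ideal_gen smult a = \<Inter>{I. End_ideal smult I \<and> a \<in> I}"

definition End_principal_ideal :: "('m::ab_group_add \<Rightarrow> 'r::ring_1 \<Rightarrow> 'm) \<Rightarrow> ('m \<Rightarrow> 'm) set \<Rightarrow> bool" where
  "End_principal_ideal smult I \<longleftrightarrow> (\<exists>a\<in>End smult. I = End_principal_ideal_gen smult a)"

definition r_M :: "('m::zero \<Rightarrow> 'm) set \<Rightarrow> 'm set" where
  "r_M I = {m. \<forall>\<phi>\<in>I. \<phi> m = 0}"

definition l_S_mod :: "('m::ab_group_add \<Rightarrow> 'r::ring_1 \<Rightarrow> 'm) \<Rightarrow> 'm set \<Rightarrow> ('m \<Rightarrow> 'm) set" where
  "l_S_mod smult X = {\<phi>\<in>End smult. \<forall>x\<in>X. \<phi> x = 0}"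

definition l_S_ring :: "('m::ab_group_add \<Rightarrow> 'r::ring_1 \<Rightarrow> 'm) \<Rightarrow> ('m \<Rightarrow> 'm) set \<Rightarrow> ('m \<Rightarrow> 'm) set" where
  "l_S_ring smult T = {f\<in>End smult. \<forall>t\<in>T. f \<circ> t = (\<lambda>_. 0)}"

definition locally_principally_quasi_retractable :: "('m::ab_group_add \<Rightarrow> 'r::ring_1 \<Rightarrow> 'm) \<Rightarrow> bool" where
  "locally_principally_quasi_retractable smult \<longleftrightarrow>
     (\<forall>I. End_principal_ideal smult I \<and> r_M I \<noteq> {0} \<longrightarrow>
        (\<exists>\<psi>\<in>End smult. \<psi> \<noteq> (\<lambda>_. 0) \<and> r_M I = range \<psi>))"

definition End_central :: "('m::ab_group_add \<Rightarrow> 'r::ring_1 \<Rightarrow> 'm) \<Rightarrow> ('m \<Rightarrow> 'm) \<Rightarrow> bool" where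
  "End_central smult z \<longleftrightarrow> z \<in> End smult \<and> (\<forall>s\<in>End smult. z \<circ> s = s \<circ> z)"

definition centrally_s_unital :: "('m::ab_group_add \<Rightarrow> 'r::ring_1 \<Rightarrow> 'm) \<Rightarrow> ('m \<Rightarrow> 'm) set \<Rightarrow> bool" where
  "centrally_s_unital smult J \<longleftrightarrow> (\<forall>a\<in>J. \<exists>z\<in>J. End_central smult z \<and> a \<circ> z = a)"

definition left_centrally_AIP :: "('m::ab_group_add \<Rightarrow> 'r::ring_1 \<Rightarrow> 'm) \<Rightarrow> bool" where
  "left_centrally_AIP smult \<longleftrightarrow>
     (\<forall>T. End_ideal smult T \<longrightarrow> centrally_s_unital smult (l_S_ring smult T))"

definition submodule :: "('m::ab_group_add \<Rightarrow> 'r::ring_1 \<Rightarrow> 'm) \<Rightarrow> 'm set \<Rightarrow> bool" where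
  "submodule smult N \<longleftrightarrow> 0 \<in> N \<and> (\<forall>x\<in>N. \<forall>y\<in>N. x - y \<in> N) \<and> (\<forall>x\<in>N. \<forall>r. smult x r \<in> N)"

definition fully_invariant :: "('m::ab_group_add \<Rightarrow> 'r::ring_1 \<Rightarrow> 'm) \<Rightarrow> 'm set \<Rightarrow> bool" where
  "fully_invariant smult N \<longleftrightarrow> submodule smult N \<and> (\<forall>\<phi>\<in>End smult. \<phi> ` N \<subseteq> N)"

definition centrally_endo_AIP :: "('m::ab_group_add \<Rightarrow> 'r::ring_1 \<Rightarrow> 'm) \<Rightarrow> bool" where
  "centrally_endo_AIP smult \<longleftrightarrow>
     (\<forall>N. fully_invariant smult N \<longrightarrow>
        End_ideal smult (l_S_mod smult N) \<and> centrally_s_unital smult (l_S_mod smult N))"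

end

theory Submission
  imports Defs
begin

lemma End_zero: "f \<in> End smult \<Longrightarrow> f 0 = 0"
  unfolding End_def by (metis (mono_tags, lifting) add_cancel_right_right mem_Collect_eq)

lemma End_diff: "f \<in> End smult \<Longrightarrow> f (x - y) = f x - f y"
proof -
  assume "f \<in> End smult"
  then have "f (x - y + y) = f (x - y) + f y" unfolding End_def by blast
  then show ?thesis by (metis add_diff_cancel diff_add_cancel)
qed

lemma smult_diff: "right_module smult \<Longrightarrow> smult (x - y) r = smult x r - smult y r"
proof -
  assume "right_module smult"
  then have "smult (x - y + y) r = smult (x - y) r + smult y r" unfolding right_module_def by blast
  then show ?thesis by (metis add_diff_cancel diff_add_cancel)
qed

lemma End_sub: "right_module smult \<Longrightarrow> a \<in> End smult \<Longrightarrow> b \<in> End smult \<Longrightarrow> (\<lambda>x. a x - b x) \<in> End smult"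
  unfolding End_def by (auto simp: smult_diff algebra_simps)

lemma End_zero_fun: "right_module smult \<Longrightarrow> (\<lambda>_. 0) \<in> End smult"
  using End_sub[of smult id id] unfolding End_def right_module_def by auto

lemma End_comp: "a \<in> End smult \<Longrightarrow> b \<in> End smult \<Longrightarrow> a \<circ> b \<in> End smult"
  unfolding End_def by auto

lemma End_id: "id \<in> End smult"
  unfolding End_def by auto

lemma End_ideal_End: "right_module smult \<Longrightarrow> End_ideal smult (End smult)"
  unfolding End_ideal_def using End_sub End_zero_fun End_comp by blast

theorem proposition3p5:
  fixes smult :: "'m::ab_group_add \<Rightarrow> 'r::ring_1 \<Rightarrow> 'm"
  assumes "right_module smult"
    and "locally_principally_quasi_retractable smult"
    and "left_centrally_AIP smult"
  shows "centrally_endo_AIP smult"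
  unfolding centrally_endo_AIP_def
proof (intro allI impI conjI)
  fix N assume fi: "fully_invariant smult N"
  have z0: "0 \<in> N" using fi unfolding fully_invariant_def submodule_def by auto
  have inv: "\<And>s x. s \<in> End smult \<Longrightarrow> x \<in> N \<Longrightarrow> s x \<in> N"
    using fi unfolding fully_invariant_def by auto
  show idl: "End_ideal smult (l_S_mod smult N)"
    unfolding End_ideal_def l_S_mod_def
    using End_sub[OF assms(1)] End_zero_fun[OF assms(1)] End_comp End_zero inv
    by auto
  show "centrally_s_unital smult (l_S_mod smult N)"
    unfolding centrally_s_unital_def
  proof
    fix a assume aN: "a \<in> l_S_mod smult N"
    then have aE: "a \<in> End smult" unfolding l_S_mod_def by auto
    define I where "I = End_principal_ideal_gen smult a"
    have aI: "a \<in> I" unfolding I_def End_principal_ideal_gen_def by auto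
    have IE: "I \<subseteq> End smult" unfolding I_def End_principal_ideal_gen_def
      using End_ideal_End[OF assms(1)] aE by auto
    have IN: "I \<subseteq> l_S_mod smult N" unfolding I_def End_principal_ideal_gen_def
      using idl aN by auto
    have Icomp: "\<And>\<phi> s. \<phi> \<in> I \<Longrightarrow> s \<in> End smult \<Longrightarrow> \<phi> \<circ> s \<in> I"
      unfolding I_def End_principal_ideal_gen_def End_ideal_def by auto
    have Nr: "N \<subseteq> r_M I" using IN unfolding r_M_def l_S_mod_def by auto
    have pI: "End_principal_ideal smult I" unfolding End_principal_ideal_def I_def using aE by auto
    show "\<exists>z\<in>l_S_mod smult N. End_central smult z \<and> a \<circ> z = a"
    proof (cases "r_M I = {0}")
      case True
      then have "N \<subseteq> {0}" using Nr by auto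
      then have "id \<in> l_S_mod smult N" unfolding l_S_mod_def using End_id End_zero by fastforce
      moreover have "End_central smult id" unfolding End_central_def using End_id by auto
      ultimately show ?thesis by auto
    next
      case False
      then obtain \<psi> where \<psi>E: "\<psi> \<in> End smult" and \<psi>r: "r_M I = range \<psi>"
        using assms(2) pI unfolding locally_principally_quasi_retractable_def by blast
      define T where "T = {t \<in> End smult. range t \<subseteq> r_M I}"
      have rinv: "\<And>s m. s \<in> End smult \<Longrightarrow> m \<in> r_M I \<Longrightarrow> s m \<in> r_M I"
      proof -
        fix s m assume s: "s \<in> End smult" and m: "m \<in> r_M I"
        show "s m \<in> r_M I" unfolding r_M_def
        proof
          show "\<forall>\<phi>\<in>I. \<phi> (s m) = 0"
          proof
            fix \<phi> assume "\<phi> \<in> I"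
            then have "\<phi> \<circ> s \<in> I" using Icomp s by auto
            then show "\<phi> (s m) = 0" using m unfolding r_M_def by auto
          qed
        qed
      qed
      have rsub: "\<And>x y. x \<in> r_M I \<Longrightarrow> y \<in> r_M I \<Longrightarrow> x - y \<in> r_M I"
        unfolding r_M_def using IE End_diff by fastforce
      have r0: "0 \<in> r_M I" unfolding r_M_def using IE End_zero by blast
      have Tid: "End_ideal smult T"
        unfolding End_ideal_def T_def
        using End_sub[OF assms(1)] End_zero_fun[OF assms(1)] End_comp rinv rsub r0
        by (auto simp: image_subset_iff)
      have aT: "a \<in> l_S_ring smult T"
        unfolding l_S_ring_def T_def using aE aI by (auto simp: r_M_def fun_eq_iff image_subset_iff)
      obtain z where zT: "z \<in> l_S_ring smult T" and zc: "End_central smult z" and az: "a \<circ> z = a"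
        using assms(3) Tid aT unfolding left_centrally_AIP_def centrally_s_unital_def by blast
      have "\<psi> \<in> T" unfolding T_def using \<psi>E \<psi>r by auto
      then have "z \<circ> \<psi> = (\<lambda>_. 0)" using zT unfolding l_S_ring_def by auto
      then have "\<forall>x\<in>r_M I. z x = 0" using \<psi>r by (auto simp: fun_eq_iff)
      then have "z \<in> l_S_mod smult N" using Nr zc unfolding l_S_mod_def End_central_def by auto
      then show ?thesis using zc az by auto
    qed
  qed
qed

end
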